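(* Let $\sigma>0$, let $f(y)=\frac{1}{y\sigma\sqrt{2\pi}}e^{-(\log y)^2/(2\sigma^2)}$ ($y>0$) be the lognormal$(0,\sigma^2)$ density, $\mathcal{L}(\theta)=\int_0^\infty e^{-\theta y}f(y)\,dy$ its Laplace transform and $\kappa=\log\mathcal{L}$. For $\theta\ge 0$ let $F_\theta$ be the distribution with density $e^{-\theta y-\kappa(\theta)}f(y)$, $y>0$. Fix $x$ with $0<x<e^{\sigma^2/2}$ and let $\theta(x)>0$ be the solution of $-\kappa'(\theta(x))=x$, i.e. the mean of $F_{\theta(x)}$ equals $x$. For $n\ge1$ let $X_1,\dots,X_n$ be i.i.d. with distribution $F_{\theta(x)}$, $S_n=X_1+\dots+X_n$, and define $$\beta_n(x)=\mathcal{L}^n(\theta(x))\,e^{\theta(x)S_n}\,\mathbf{1}\{S_n<nx\}.$$ Let $\alpha_n(x)=\mathbb{P}(S_n'\le nx)$ where $S_n'$ is a sum of $n$ i.i.d. lognormal$(0,\sigma^2)$ random variables. Then $\beta_n(x)$ is an unbiased estimator of $\alpha_n(x)$ (i.e. $\mathbb{E}[\beta_n(x)]=\alpha_n(x)$ for every $n$), and it is logarithmically efficient as $n\to\infty$: for every $\epsilon>0$, $$\limsup_{n\to\infty}\frac{\mathrm{Var}\,\beta_n(x)}{\alpha_n(x)^{2-\epsilon}}=0.$$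
   Context: $e^{\sigma^2/2}$ is the mean of the lognormal$(0,\sigma^2)$ distribution; for $0<x<e^{\sigma^2/2}$ the equation $-\kappa'(\theta)=x$ has a unique solution $\theta(x)>0$ (the Cramér function). *)

theory Defs
  imports "HOL-Probability.Probability"
begin

definition lognormal_density :: "real \<Rightarrow> real \<Rightarrow> real" where
  "lognormal_density \<sigma> y =
     (if 0 < y then exp (- (ln y)\<^sup>2 / (2 * \<sigma>\<^sup>2)) / (y * \<sigma> * sqrt (2 * pi)) else 0)"

definition lognormal_laplace :: "real \<Rightarrow> real \<Rightarrow> real" where
  "lognormal_laplace \<sigma> \<theta> = (\<integral>y. exp (- \<theta> * y) * lognormal_density \<sigma> y \<partial>lborel)"

definition lognormal_kappa :: "real \<Rightarrow> real \<Rightarrow> real" where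
  "lognormal_kappa \<sigma> \<theta> = ln (lognormal_laplace \<sigma> \<theta>)"

definition lognormal_distr :: "real \<Rightarrow> real measure" where
  "lognormal_distr \<sigma> = density lborel (\<lambda>y. ennreal (lognormal_density \<sigma> y))"

definition tilted_distr :: "real \<Rightarrow> real \<Rightarrow> real measure" where
  "tilted_distr \<sigma> \<theta> =
     density lborel (\<lambda>y. ennreal (exp (- \<theta> * y - lognormal_kappa \<sigma> \<theta>) * lognormal_density \<sigma> y))"

definition iid_law :: "nat \<Rightarrow> real measure \<Rightarrow> (nat \<Rightarrow> real) measure" where
  "iid_law n M = PiM {..<n} (\<lambda>_. M)"

definition beta_est :: "real \<Rightarrow> real \<Rightarrow> real \<Rightarrow> nat \<Rightarrow> (nat \<Rightarrow> real) \<Rightarrow> real" where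
  "beta_est \<sigma> \<theta> x n X =
     (lognormal_laplace \<sigma> \<theta>) ^ n * exp (\<theta> * (\<Sum>i<n. X i))
       * indicator {s. s < real n * x} (\<Sum>i<n. X i)"

definition alpha_prob :: "real \<Rightarrow> real \<Rightarrow> nat \<Rightarrow> real" where
  "alpha_prob \<sigma> x n =
     measure (iid_law n (lognormal_distr \<sigma>))
       {X \<in> space (iid_law n (lognormal_distr \<sigma>)). (\<Sum>i<n. X i) \<le> real n * x}"

definition beta_mean :: "real \<Rightarrow> real \<Rightarrow> real \<Rightarrow> nat \<Rightarrow> real" where
  "beta_mean \<sigma> \<theta> x n = (\<integral>X. beta_est \<sigma> \<theta> x n X \<partial>iid_law n (tilted_distr \<sigma> \<theta>))"

definition beta_var :: "real \<Rightarrow> real \<Rightarrow> real \<Rightarrow> nat \<Rightarrow> real" where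
  "beta_var \<sigma> \<theta> x n =
     (\<integral>X. (beta_est \<sigma> \<theta> x n X - beta_mean \<sigma> \<theta> x n)\<^sup>2 \<partial>iid_law n (tilted_distr \<sigma> \<theta>))"

end

theory Submission
  imports Defs
begin


lemma ld_nonneg: "\<sigma> > 0 \<Longrightarrow> 0 \<le> lognormal_density \<sigma> y"
  unfolding lognormal_density_def by auto

lemma ld_pos: "\<sigma> > 0 \<Longrightarrow> 0 < y \<Longrightarrow> 0 < lognormal_density \<sigma> y"
  unfolding lognormal_density_def by auto

lemma ld_zero: "y \<le> 0 \<Longrightarrow> lognormal_density \<sigma> y = 0"
  unfolding lognormal_density_def by auto

lemma ld_meas[measurable]: "lognormal_density \<sigma> \<in> borel_measurable borel"
  unfolding lognormal_density_def by measurable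

lemma ld_exp: "\<sigma> > 0 \<Longrightarrow> lognormal_density \<sigma> (exp u) * exp u = normal_density 0 \<sigma> u"
  unfolding lognormal_density_def normal_density_def
  by (simp add: real_sqrt_mult power2_eq_square field_simps)


lemma ld_nn_integral_1:
  assumes s: "\<sigma> > 0"
  shows "(\<integral>\<^sup>+y. ennreal (lognormal_density \<sigma> y) \<partial>lborel) = 1"
proof -
  let ?f = "lognormal_density \<sigma>"
  have sub: "(\<integral>\<^sup>+y. ennreal (?f y * indicator {exp (- real k)..exp (real k)} y) \<partial>lborel)
      = (\<integral>\<^sup>+u. ennreal (normal_density 0 \<sigma> u * indicator {- real k..real k} u) \<partial>lborel)" for k :: nat
  proof -
    have "(\<integral>\<^sup>+y. ennreal (?f y * indicator {exp (- real k)..exp (real k)} y) \<partial>lborel)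
      = (\<integral>\<^sup>+u. ennreal (?f (exp u) * exp u * indicator {- real k..real k} u) \<partial>lborel)"
      by (rule nn_integral_substitution[where g=exp and g'=exp and a="- real k" and b="real k"])
         (auto simp: set_borel_measurable_def intro!: DERIV_exp continuous_on_exp continuous_on_id)
    then show ?thesis using ld_exp[OF s] by simp
  qed
  have inc1: "incseq (\<lambda>k::nat. \<lambda>y. ennreal (?f y * indicator {exp (- real k)..exp (real k)} y))"
  proof (clarsimp simp: incseq_def le_fun_def)
    fix m n :: nat and y assume mn: "m \<le> n"
    have e: "exp (- real n) \<le> exp (- real m)" "exp (real m) \<le> exp (real n)" using mn by auto
    have S: "{exp (- real m)..exp (real m)} \<subseteq> {exp (- real n)..exp (real n)}"
      using e by (intro subsetI) (simp only: atLeastAtMost_iff, meson order_trans)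
    have I: "indicator {exp (- real m)..exp (real m)} y \<le> (indicator {exp (- real n)..exp (real n)} y :: real)"
      using S by (metis indicator_simps(1,2) order_refl subsetD zero_le_one)
    show "ennreal (?f y * indicator {exp (- real m)..exp (real m)} y) \<le> ennreal (?f y * indicator {exp (- real n)..exp (real n)} y)"
      by (intro ennreal_leI mult_left_mono I ld_nonneg[OF s])
  qed
  have inc2: "incseq (\<lambda>k::nat. \<lambda>u. ennreal (normal_density 0 \<sigma> u * indicator {- real k..real k} u))"
    by (auto simp: incseq_def le_fun_def split: split_indicator intro!: ennreal_leI)
  have sup1: "(SUP k::nat. ennreal (?f y * indicator {exp (- real k)..exp (real k)} y)) = ennreal (?f y)" for y
  proof (rule antisym)
    show "(SUP k::nat. ennreal (?f y * indicator {exp (- real k)..exp (real k)} y)) \<le> ennreal (?f y)"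
      by (rule SUP_least) (auto simp: ld_nonneg[OF s] split: split_indicator intro!: ennreal_leI)
  next
    show "ennreal (?f y) \<le> (SUP k::nat. ennreal (?f y * indicator {exp (- real k)..exp (real k)} y))"
    proof (cases "y > 0")
      case True
      obtain k :: nat where k: "\<bar>ln y\<bar> \<le> real k" using real_arch_simple by blast
      have "exp (- real k) \<le> y" using k True
        by (metis abs_le_iff exp_le_cancel_iff exp_ln minus_le_iff)
      moreover have "y \<le> exp (real k)" using k True
        by (metis abs_le_iff exp_le_cancel_iff exp_ln)
      ultimately show ?thesis
        by (intro SUP_upper2[where i=k]) auto
    next
      case False then show ?thesis by (simp add: ld_zero)
    qed
  qed
  have sup2: "(SUP k::nat. ennreal (normal_density 0 \<sigma> u * indicator {- real k..real k} u)) = ennreal (normal_density 0 \<sigma> u)" for u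
  proof (rule antisym)
    show "(SUP k::nat. ennreal (normal_density 0 \<sigma> u * indicator {- real k..real k} u)) \<le> ennreal (normal_density 0 \<sigma> u)"
      by (rule SUP_least) (auto split: split_indicator intro!: ennreal_leI)
  next
    obtain k :: nat where k: "\<bar>u\<bar> \<le> real k" using real_arch_simple by blast
    then have "u \<in> {- real k..real k}" by auto
    then show "ennreal (normal_density 0 \<sigma> u) \<le> (SUP k::nat. ennreal (normal_density 0 \<sigma> u * indicator {- real k..real k} u))"
      by (intro SUP_upper2[where i=k]) auto
  qed
  have "(\<integral>\<^sup>+y. ennreal (?f y) \<partial>lborel) = (\<integral>\<^sup>+y. (SUP k::nat. ennreal (?f y * indicator {exp (- real k)..exp (real k)} y)) \<partial>lborel)"
    by (simp add: sup1)
  also have "\<dots> = (SUP k::nat. \<integral>\<^sup>+y. ennreal (?f y * indicator {exp (- real k)..exp (real k)} y) \<partial>lborel)"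
    by (rule nn_integral_monotone_convergence_SUP[OF inc1]) simp
  also have "\<dots> = (SUP k::nat. \<integral>\<^sup>+u. ennreal (normal_density 0 \<sigma> u * indicator {- real k..real k} u) \<partial>lborel)"
    by (simp add: sub)
  also have "\<dots> = (\<integral>\<^sup>+u. (SUP k::nat. ennreal (normal_density 0 \<sigma> u * indicator {- real k..real k} u)) \<partial>lborel)"
    by (rule nn_integral_monotone_convergence_SUP[OF inc2, symmetric]) simp
  also have "\<dots> = (\<integral>\<^sup>+u. ennreal (normal_density 0 \<sigma> u) \<partial>lborel)"
    by (simp add: sup2)
  also have "\<dots> = 1"
    using integral_normal_density[OF s, of 0] integrable_normal_density[OF s, of 0]
    by (subst nn_integral_eq_integral) auto
  finally show ?thesis .
qed


lemma exp_strict: "z \<noteq> 0 \<Longrightarrow> 1 + z < exp (z::real)"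
proof -
  assume z: "z \<noteq> 0"
  show ?thesis
  proof (cases "1 + z/2 \<ge> 0")
    case True
    have "(1 + z/2)^2 \<le> exp (z/2) ^ 2"
      using True exp_ge_add_one_self[of "z/2"] by (intro power_mono) auto
    also have "\<dots> = exp z" by (simp add: exp_double[symmetric] power2_eq_square exp_add[symmetric])
    finally have "(1 + z/2)^2 \<le> exp z" .
    moreover have "0 < z * z" using z by (cases "z > 0") (simp_all add: mult_neg_neg)
    then have "1 + z < (1 + z/2)^2" by (simp add: power2_eq_square field_simps)
    ultimately show ?thesis by linarith
  next
    case False
    then have "1 + z < 0" by linarith
    then show ?thesis using exp_gt_zero[of z] by linarith
  qed
qed

lemma not_AE_nonpos_or_pt: "\<not> (AE y in lborel. y \<le> (0::real) \<or> y = m)"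
proof
  assume "AE y in lborel. y \<le> (0::real) \<or> y = m"
  then have "AE y in lborel. y \<le> (0::real)"
    using AE_lborel_singleton[of m] by eventually_elim auto
  then obtain N where N: "{x \<in> space lborel. \<not> x \<le> (0::real)} \<subseteq> N" "emeasure lborel N = 0" "N \<in> sets lborel"
    by (rule AE_E)
  have "{1..2::real} \<subseteq> N" using N(1) by auto
  then have "emeasure lborel {1..2::real} \<le> emeasure lborel N" using N(3) by (intro emeasure_mono) auto
  then show False using N(2) by simp
qed

context
  fixes \<sigma> :: real
  assumes s: "\<sigma> > 0"
begin

lemma ld_integrable: "integrable lborel (lognormal_density \<sigma>)"
  using ld_nn_integral_1[OF s] ld_nonneg[OF s] by (intro integrableI_nonneg) auto

lemma ld_integral: "(\<integral>y. lognormal_density \<sigma> y \<partial>lborel) = 1"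
  using ld_nn_integral_1[OF s] ld_nonneg[OF s] ld_integrable
  by (subst (asm) nn_integral_eq_integral) auto

lemma lap_integrable: "t \<ge> 0 \<Longrightarrow> integrable lborel (\<lambda>y. exp (- t * y) * lognormal_density \<sigma> y)"
proof (rule Bochner_Integration.integrable_bound[OF ld_integrable])
  assume t: "t \<ge> 0"
  show "AE x in lborel. norm (exp (- t * x) * lognormal_density \<sigma> x) \<le> norm (lognormal_density \<sigma> x)"
  proof (rule AE_I2)
    fix x :: real
    show "norm (exp (- t * x) * lognormal_density \<sigma> x) \<le> norm (lognormal_density \<sigma> x)"
    proof (cases "x > 0")
      case True
      have "exp (- t * x) \<le> 1" using t True by (simp add: mult_nonneg_nonneg)
      then show ?thesis using ld_nonneg[OF s, of x] by (simp add: mult_left_le_one_le)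
    qed (simp add: ld_zero)
  qed
qed simp

lemma mom_integrable: "t > 0 \<Longrightarrow> integrable lborel (\<lambda>y. y * exp (- t * y) * lognormal_density \<sigma> y)"
proof (rule Bochner_Integration.integrable_bound[OF integrable_mult_right[OF ld_integrable, of "1/t"]])
  assume t: "t > 0"
  show "AE x in lborel. norm (x * exp (- t * x) * lognormal_density \<sigma> x) \<le> norm (1/t * lognormal_density \<sigma> x)"
  proof (rule AE_I2)
    fix x :: real
    show "norm (x * exp (- t * x) * lognormal_density \<sigma> x) \<le> norm (1/t * lognormal_density \<sigma> x)"
    proof (cases "x > 0")
      case True
      have "t * x < exp (t * x)" by (rule exp_gt_self)
      then have "x * exp (- t * x) \<le> 1/t" using t True
        by (simp add: exp_minus field_simps)
      have "norm (x * exp (- t * x) * lognormal_density \<sigma> x) = (x * exp (- t * x)) * lognormal_density \<sigma> x"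
        using True ld_nonneg[OF s, of x] by (simp add: abs_mult)
      also have "\<dots> \<le> (1/t) * lognormal_density \<sigma> x"
        using ld_nonneg[OF s, of x] \<open>x * exp (- t * x) \<le> 1/t\<close> by (rule mult_right_mono[rotated])
      also have "\<dots> = norm (1/t * lognormal_density \<sigma> x)" using ld_nonneg[OF s, of x] t by simp
      finally show ?thesis .
    qed (simp add: ld_zero)
  qed
qed simp

lemma lap_pos: "t \<ge> 0 \<Longrightarrow> lognormal_laplace \<sigma> t > 0"
proof -
  assume t: "t \<ge> 0"
  have nn: "AE y in lborel. 0 \<le> exp (- t * y) * lognormal_density \<sigma> y"
    using ld_nonneg[OF s] by auto
  have ge: "lognormal_laplace \<sigma> t \<ge> 0" unfolding lognormal_laplace_def
    using ld_nonneg[OF s] by (intro integral_nonneg_AE) auto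
  moreover have "lognormal_laplace \<sigma> t \<noteq> 0"
  proof
    assume "lognormal_laplace \<sigma> t = 0"
    then have "AE y in lborel. exp (- t * y) * lognormal_density \<sigma> y = 0"
      unfolding lognormal_laplace_def using integral_nonneg_eq_0_iff_AE[OF lap_integrable[OF t] nn] by simp
    then have "AE y in lborel. y \<le> 0 \<or> y = (0::real)"
    proof (rule eventually_mono)
      fix y assume "exp (- t * y) * lognormal_density \<sigma> y = 0"
      then show "y \<le> 0 \<or> y = 0" using ld_pos[OF s, of y] by (cases "y > 0") auto
    qed
    then show False using not_AE_nonpos_or_pt by blast
  qed
  ultimately show ?thesis by simp
qed

lemma lap_0: "lognormal_laplace \<sigma> 0 = 1"
  unfolding lognormal_laplace_def using ld_integral by simp

lemma jensen_strict:
  assumes t: "t > 0" and tc: "t + c \<ge> 0" and c: "c \<noteq> 0"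
  defines "m \<equiv> (\<integral>y. y * exp (- t * y) * lognormal_density \<sigma> y \<partial>lborel) / lognormal_laplace \<sigma> t"
  shows "lognormal_laplace \<sigma> (t + c) > exp (- c * m) * lognormal_laplace \<sigma> t"
proof -
  let ?f = "lognormal_density \<sigma>"
  let ?L = "lognormal_laplace \<sigma>"
  define M where "M = (\<integral>y. y * exp (- t * y) * ?f y \<partial>lborel)"
  have Lt: "?L t > 0" using lap_pos t by simp
  have mM: "M = m * ?L t" unfolding m_def M_def using Lt by simp
  define D where "D y = exp (- (t + c) * y) * ?f y - exp (- c * m) * (exp (- t * y) * ?f y)
       + (exp (- c * m) * c) * (y * exp (- t * y) * ?f y) - (exp (- c * m) * c * m) * (exp (- t * y) * ?f y)" for y
  have iD: "integrable lborel D"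
    unfolding D_def using lap_integrable[OF tc] lap_integrable[of t] mom_integrable[OF t] t
    by (intro Bochner_Integration.integrable_diff Bochner_Integration.integrable_add integrable_mult_right) auto
  have intD: "(\<integral>y. D y \<partial>lborel) = ?L (t + c) - exp (- c * m) * ?L t"
  proof -
    have "has_bochner_integral lborel D (?L (t + c) - exp (- c * m) * ?L t + (exp (- c * m) * c) * M - (exp (- c * m) * c * m) * ?L t)"
      unfolding D_def lognormal_laplace_def M_def
      using lap_integrable[OF tc] lap_integrable[of t] mom_integrable[OF t] t
      by (intro has_bochner_integral_diff has_bochner_integral_add has_bochner_integral_mult_right has_bochner_integral_integrable) auto
    then show ?thesis using mM by (simp add: has_bochner_integral_integral_eq algebra_simps)
  qed
  have Dform: "D y = (exp (- c * y) - exp (- c * m) * (1 - c * (y - m))) * (exp (- t * y) * ?f y)" for y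
    unfolding D_def by (simp add: algebra_simps exp_add[symmetric])
  have key: "exp (- c * m) * (1 - c * (y - m)) \<le> exp (- c * y)" for y
  proof -
    have "exp (- c * m) * (1 + (- c * (y - m))) \<le> exp (- c * m) * exp (- c * (y - m))"
      by (intro mult_left_mono exp_ge_add_one_self) auto
    also have "\<dots> = exp (- c * y)" by (simp add: exp_add[symmetric] algebra_simps)
    finally show ?thesis by simp
  qed
  have keys: "exp (- c * m) * (1 - c * (y - m)) < exp (- c * y)" if "y \<noteq> m" for y
  proof -
    have "exp (- c * m) * (1 + (- c * (y - m))) < exp (- c * m) * exp (- c * (y - m))"
      using that c by (intro mult_strict_left_mono exp_strict) auto
    also have "\<dots> = exp (- c * y)" by (simp add: exp_add[symmetric] algebra_simps)
    finally show ?thesis by simp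
  qed
  have Dnn: "AE y in lborel. 0 \<le> D y"
    using key ld_nonneg[OF s] by (auto simp: Dform)
  have "(\<integral>y. D y \<partial>lborel) \<noteq> 0"
  proof
    assume "(\<integral>y. D y \<partial>lborel) = 0"
    then have "AE y in lborel. D y = 0" using integral_nonneg_eq_0_iff_AE[OF iD Dnn] by simp
    then have "AE y in lborel. y \<le> 0 \<or> y = m"
    proof eventually_elim
      case (elim y)
      show ?case
      proof (rule ccontr)
        assume "\<not> (y \<le> 0 \<or> y = m)"
        then have "y > 0" "y \<noteq> m" by auto
        then have "0 < D y" unfolding Dform using keys ld_pos[OF s]
          by (intro mult_pos_pos) auto
        then show False using elim by simp
      qed
    qed
    then show False using not_AE_nonpos_or_pt by blast
  qed
  moreover have "(\<integral>y. D y \<partial>lborel) \<ge> 0" using Dnn by (intro integral_nonneg_AE)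
  ultimately show ?thesis using intD by simp
qed

end


context
  fixes \<sigma> \<theta> x :: real
  assumes s: "\<sigma> > 0" and th: "\<theta> > 0"
    and der: "(lognormal_kappa \<sigma> has_real_derivative (- x)) (at \<theta>)"
begin

definition "mth = (\<integral>y. y * exp (- \<theta> * y) * lognormal_density \<sigma> y \<partial>lborel) / lognormal_laplace \<sigma> \<theta>"

lemma kappa_ineq_m: "h \<noteq> 0 \<Longrightarrow> \<theta> + h \<ge> 0 \<Longrightarrow> lognormal_kappa \<sigma> (\<theta> + h) > lognormal_kappa \<sigma> \<theta> - h * mth"
proof -
  assume h: "h \<noteq> 0" "\<theta> + h \<ge> 0"
  have j: "lognormal_laplace \<sigma> (\<theta> + h) > exp (- h * mth) * lognormal_laplace \<sigma> \<theta>"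
    using jensen_strict[OF s th h(2) h(1)] unfolding mth_def by simp
  have Lp: "lognormal_laplace \<sigma> \<theta> > 0" using lap_pos[OF s] th by simp
  have "ln (exp (- h * mth) * lognormal_laplace \<sigma> \<theta>) < ln (lognormal_laplace \<sigma> (\<theta> + h))"
    using j Lp lap_pos[OF s h(2)] by (subst ln_less_cancel_iff) auto
  then show ?thesis unfolding lognormal_kappa_def using Lp by (simp add: ln_mult)
qed

lemma mth_eq: "mth = x"
proof -
  let ?k = "lognormal_kappa \<sigma>"
  let ?Q = "\<lambda>h. (?k (\<theta> + h) - ?k \<theta>) / h"
  have lim: "(?Q \<longlongrightarrow> - x) (at 0)" using der by (simp add: DERIV_def)
  have limr: "(?Q \<longlongrightarrow> - x) (at_right 0)" and liml: "(?Q \<longlongrightarrow> - x) (at_left 0)"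
    using lim by (simp_all add: filterlim_at_split)
  have "- mth \<le> - x"
  proof (rule tendsto_lowerbound[OF limr])
    show "\<forall>\<^sub>F h in at_right 0. - mth \<le> ?Q h"
    proof (rule eventually_at_rightI[where b=1])
      fix h :: real assume "h \<in> {0<..<1}"
      then have h: "h > 0" by simp
      then have "?k (\<theta> + h) - ?k \<theta> > - h * mth" using kappa_ineq_m[of h] th by simp
      then show "- mth \<le> ?Q h" using h by (simp add: field_simps)
    qed simp
  qed simp
  moreover have "- x \<le> - mth"
  proof (rule tendsto_upperbound[OF liml])
    show "\<forall>\<^sub>F h in at_left 0. ?Q h \<le> - mth"
    proof (rule eventually_at_leftI[where a="- \<theta>"])
      fix h :: real assume "h \<in> {- \<theta><..<0}"
      then have h: "h < 0" "\<theta> + h \<ge> 0" by auto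
      then have "?k (\<theta> + h) - ?k \<theta> > - h * mth" using kappa_ineq_m[of h] by simp
      then show "?Q h \<le> - mth" using h by (simp add: field_simps)
    qed (use th in simp)
  qed simp
  ultimately show ?thesis by simp
qed

lemma kappa_tangent: "h > 0 \<Longrightarrow> lognormal_kappa \<sigma> (\<theta> + h) > lognormal_kappa \<sigma> \<theta> - h * x"
  using kappa_ineq_m[of h] th mth_eq by simp

lemma J_neg: "lognormal_kappa \<sigma> \<theta> + \<theta> * x < 0"
proof -
  have "lognormal_kappa \<sigma> (\<theta> + (- \<theta>)) > lognormal_kappa \<sigma> \<theta> - (- \<theta>) * mth"
    using th by (intro kappa_ineq_m) auto
  then show ?thesis using lap_0[OF s] mth_eq unfolding lognormal_kappa_def by simp
qed

end


lemma PiM_density_lborel: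
  fixes g :: "real \<Rightarrow> real" and I :: "nat set"
  assumes g[measurable]: "g \<in> borel_measurable borel" and gnn: "\<And>y. 0 \<le> g y"
    and ps: "prob_space (density lborel (\<lambda>y. ennreal (g y)))"
    and I: "finite I"
  shows "PiM I (\<lambda>_. density lborel (\<lambda>y. ennreal (g y)))
       = density (PiM I (\<lambda>_. lborel)) (\<lambda>X. \<Prod>i\<in>I. ennreal (g (X i)))"
proof -
  let ?M = "\<lambda>_::nat. density lborel (\<lambda>y. ennreal (g y))"
  interpret P: product_sigma_finite ?M
    using ps by (simp add: product_sigma_finite_def prob_space_imp_sigma_finite)
  interpret L: product_sigma_finite "\<lambda>_::nat. lborel :: real measure"
    by (simp add: product_sigma_finite_def sigma_finite_lborel)
  have meas: "(\<lambda>X. \<Prod>i\<in>I. ennreal (g (X i))) \<in> borel_measurable (PiM I (\<lambda>_. lborel))"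
    by (rule borel_measurable_prod_ennreal) measurable
  show ?thesis
  proof (rule P.PiM_eqI[OF I, symmetric])
    show "sets (density (PiM I (\<lambda>_. lborel)) (\<lambda>X. \<Prod>i\<in>I. ennreal (g (X i)))) = sets (PiM I ?M)"
      by (simp only: sets_density) (rule sets_PiM_cong, auto)
  next
    fix A assume A: "\<And>i. i \<in> I \<Longrightarrow> A i \<in> sets (?M i)"
    then have A': "\<And>i. i \<in> I \<Longrightarrow> A i \<in> sets lborel" by simp
    have box: "Pi\<^sub>E I A \<in> sets (PiM I (\<lambda>_. lborel))"
      using A' by (intro sets_PiM_I_finite I) auto
    have "emeasure (density (PiM I (\<lambda>_. lborel)) (\<lambda>X. \<Prod>i\<in>I. ennreal (g (X i)))) (Pi\<^sub>E I A)
        = (\<integral>\<^sup>+X. (\<Prod>i\<in>I. ennreal (g (X i))) * indicator (Pi\<^sub>E I A) X \<partial>PiM I (\<lambda>_. lborel))"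
      using box meas by (rule emeasure_density[rotated])
    also have "\<dots> = (\<integral>\<^sup>+X. (\<Prod>i\<in>I. ennreal (g (X i)) * indicator (A i) (X i)) \<partial>PiM I (\<lambda>_. lborel))"
    proof (rule nn_integral_cong)
      fix X assume X: "X \<in> space (PiM I (\<lambda>_. lborel :: real measure))"
      have "indicator (Pi\<^sub>E I A) X = (\<Prod>i\<in>I. indicator (A i) (X i) :: ennreal)"
      proof (cases "\<forall>i\<in>I. X i \<in> A i")
        case True
        then have "X \<in> Pi\<^sub>E I A" using X by (auto simp: space_PiM PiE_iff)
        then show ?thesis using True by (simp add: prod.neutral)
      next
        case False
        then obtain i where i: "i \<in> I" "X i \<notin> A i" by auto
        then have "X \<notin> Pi\<^sub>E I A" by (auto simp: PiE_iff)
        moreover have "(\<Prod>i\<in>I. indicator (A i) (X i) :: ennreal) = 0"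
          using i I by (intro prod_zero bexI[of _ i]) auto
        ultimately show ?thesis by simp
      qed
      then show "(\<Prod>i\<in>I. ennreal (g (X i))) * indicator (Pi\<^sub>E I A) X = (\<Prod>i\<in>I. ennreal (g (X i)) * indicator (A i) (X i))"
        by (simp add: prod.distrib)
    qed
    also have "\<dots> = (\<Prod>i\<in>I. \<integral>\<^sup>+y. ennreal (g y) * indicator (A i) y \<partial>lborel)"
      using A' by (intro L.product_nn_integral_prod I) auto
    also have "\<dots> = (\<Prod>i\<in>I. emeasure (?M i) (A i))"
      using A' by (intro prod.cong refl) (simp add: emeasure_density)
    finally show "emeasure (density (PiM I (\<lambda>_. lborel)) (\<lambda>X. \<Prod>i\<in>I. ennreal (g (X i)))) (Pi\<^sub>E I A) = (\<Prod>i\<in>I. emeasure (?M i) (A i))" .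
  qed
qed


definition "tdens \<sigma> t y = exp (- t * y - lognormal_kappa \<sigma> t) * lognormal_density \<sigma> y"

context
  fixes \<sigma> :: real
  assumes s: "\<sigma> > 0"
begin

lemma tdens_meas[measurable]: "tdens \<sigma> t \<in> borel_measurable borel"
  unfolding tdens_def by measurable

lemma tdens_nonneg: "0 \<le> tdens \<sigma> t y"
  unfolding tdens_def using ld_nonneg[OF s] by simp

lemma tdens_eq: "t \<ge> 0 \<Longrightarrow> tdens \<sigma> t y = exp (- t * y) * lognormal_density \<sigma> y / lognormal_laplace \<sigma> t"
  unfolding tdens_def lognormal_kappa_def using lap_pos[OF s, of t]
  by (simp add: exp_diff)

lemma tilted_eq: "tilted_distr \<sigma> t = density lborel (\<lambda>y. ennreal (tdens \<sigma> t y))"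
  unfolding tilted_distr_def tdens_def ..

lemma exp_tilt_nn_integral:
  assumes t: "t \<ge> 0" and tl: "t - l \<ge> 0"
  shows "(\<integral>\<^sup>+y. ennreal (tdens \<sigma> t y) * ennreal (exp (l * y)) \<partial>lborel)
       = ennreal (lognormal_laplace \<sigma> (t - l) / lognormal_laplace \<sigma> t)"
proof -
  have eq: "tdens \<sigma> t y * exp (l * y) = exp (- (t - l) * y) * lognormal_density \<sigma> y / lognormal_laplace \<sigma> t" for y
    using tdens_eq[OF t] by (simp add: exp_add[symmetric] algebra_simps)
  have "(\<integral>\<^sup>+y. ennreal (tdens \<sigma> t y) * ennreal (exp (l * y)) \<partial>lborel)
      = (\<integral>\<^sup>+y. ennreal (exp (- (t - l) * y) * lognormal_density \<sigma> y / lognormal_laplace \<sigma> t) \<partial>lborel)"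
    by (intro nn_integral_cong) (simp add: ennreal_mult[symmetric] tdens_nonneg eq)
  also have "\<dots> = ennreal (\<integral>y. exp (- (t - l) * y) * lognormal_density \<sigma> y / lognormal_laplace \<sigma> t \<partial>lborel)"
    using lap_integrable[OF s tl] lap_pos[OF s t] ld_nonneg[OF s]
    by (intro nn_integral_eq_integral) auto
  also have "\<dots> = ennreal (lognormal_laplace \<sigma> (t - l) / lognormal_laplace \<sigma> t)"
    unfolding lognormal_laplace_def by simp
  finally show ?thesis .
qed

lemma tilted_prob: "t \<ge> 0 \<Longrightarrow> prob_space (tilted_distr \<sigma> t)"
proof -
  assume t: "t \<ge> 0"
  have "emeasure (tilted_distr \<sigma> t) (space (tilted_distr \<sigma> t)) = 1"
    unfolding tilted_eq using exp_tilt_nn_integral[OF t, of 0] t lap_pos[OF s t]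
    by (simp add: emeasure_density)
  then show ?thesis by (rule prob_spaceI)
qed

lemma ln_prob: "prob_space (lognormal_distr \<sigma>)"
  unfolding lognormal_distr_def
  by (rule prob_spaceI) (simp add: emeasure_density ld_nn_integral_1[OF s])

lemma iid_tilted: "t \<ge> 0 \<Longrightarrow> iid_law n (tilted_distr \<sigma> t)
   = density (PiM {..<n} (\<lambda>_. lborel)) (\<lambda>X. \<Prod>i<n. ennreal (tdens \<sigma> t (X i)))"
  unfolding iid_law_def tilted_eq
  using tilted_prob[unfolded tilted_eq]
  by (intro PiM_density_lborel) (auto simp: tdens_nonneg)

lemma iid_ln: "iid_law n (lognormal_distr \<sigma>)
   = density (PiM {..<n} (\<lambda>_. lborel)) (\<lambda>X. \<Prod>i<n. ennreal (lognormal_density \<sigma> (X i)))"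
  unfolding iid_law_def
  using ln_prob[unfolded lognormal_distr_def]
  by (unfold lognormal_distr_def, intro PiM_density_lborel) (auto simp: ld_nonneg[OF s])

lemma sets_iid: "sets (iid_law n (density lborel g)) = sets (PiM {..<n} (\<lambda>_. lborel :: real measure))"
  unfolding iid_law_def by (rule sets_PiM_cong) auto

lemma change_measure:
  assumes t: "t \<ge> 0" and F[measurable]: "F \<in> borel_measurable (PiM {..<n} (\<lambda>_. lborel :: real measure))"
  shows "(\<integral>\<^sup>+X. F X \<partial>iid_law n (lognormal_distr \<sigma>))
     = (\<integral>\<^sup>+X. ennreal (lognormal_laplace \<sigma> t ^ n * exp (t * (\<Sum>i<n. X i))) * F X \<partial>iid_law n (tilted_distr \<sigma> t))"
proof -
  have m1: "(\<lambda>X. \<Prod>i<n. ennreal (lognormal_density \<sigma> (X i))) \<in> borel_measurable (PiM {..<n} (\<lambda>_. lborel :: real measure))"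
    by (rule borel_measurable_prod_ennreal) measurable
  have m2: "(\<lambda>X. \<Prod>i<n. ennreal (tdens \<sigma> t (X i))) \<in> borel_measurable (PiM {..<n} (\<lambda>_. lborel :: real measure))"
    by (rule borel_measurable_prod_ennreal) measurable
  have m3: "(\<lambda>X. ennreal (lognormal_laplace \<sigma> t ^ n * exp (t * (\<Sum>i<n. X i))) * F X) \<in> borel_measurable (PiM {..<n} (\<lambda>_. lborel :: real measure))"
    by measurable
  have Lp: "lognormal_laplace \<sigma> t > 0" using lap_pos[OF s t] .
  have pt: "(\<Prod>i<n. tdens \<sigma> t (X i)) * (lognormal_laplace \<sigma> t ^ n * exp (t * (\<Sum>i<n. X i)))
      = (\<Prod>i<n. lognormal_density \<sigma> (X i))" for X :: "nat \<Rightarrow> real"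
  proof -
    have "(\<Prod>i<n. tdens \<sigma> t (X i)) = (\<Prod>i<n. exp (- t * X i - lognormal_kappa \<sigma> t)) * (\<Prod>i<n. lognormal_density \<sigma> (X i))"
      unfolding tdens_def by (simp add: prod.distrib)
    also have "(\<Prod>i<n. exp (- t * X i - lognormal_kappa \<sigma> t)) = exp (\<Sum>i<n. - t * X i - lognormal_kappa \<sigma> t)"
      by (simp add: exp_sum)
    also have "(\<Sum>i<n. - t * X i - lognormal_kappa \<sigma> t) = - t * (\<Sum>i<n. X i) - real n * lognormal_kappa \<sigma> t"
      by (simp add: sum_subtractf sum_distrib_left)
    finally have P: "(\<Prod>i<n. tdens \<sigma> t (X i)) = exp (- t * (\<Sum>i<n. X i) - real n * lognormal_kappa \<sigma> t) * (\<Prod>i<n. lognormal_density \<sigma> (X i))" .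
    have Ln: "lognormal_laplace \<sigma> t ^ n = exp (real n * lognormal_kappa \<sigma> t)"
      unfolding lognormal_kappa_def using Lp by (simp add: exp_of_nat_mult)
    show ?thesis unfolding P Ln by (simp add: exp_diff exp_add[symmetric] field_simps)
  qed
  have "(\<integral>\<^sup>+X. F X \<partial>iid_law n (lognormal_distr \<sigma>))
      = (\<integral>\<^sup>+X. (\<Prod>i<n. ennreal (lognormal_density \<sigma> (X i))) * F X \<partial>PiM {..<n} (\<lambda>_. lborel))"
    unfolding iid_ln by (rule nn_integral_density[OF m1 F])
  also have "\<dots> = (\<integral>\<^sup>+X. (\<Prod>i<n. ennreal (tdens \<sigma> t (X i))) * (ennreal (lognormal_laplace \<sigma> t ^ n * exp (t * (\<Sum>i<n. X i))) * F X) \<partial>PiM {..<n} (\<lambda>_. lborel))"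
  proof (rule nn_integral_cong)
    fix X :: "nat \<Rightarrow> real"
    have "(\<Prod>i<n. ennreal (tdens \<sigma> t (X i))) * ennreal (lognormal_laplace \<sigma> t ^ n * exp (t * (\<Sum>i<n. X i)))
       = ennreal ((\<Prod>i<n. tdens \<sigma> t (X i)) * (lognormal_laplace \<sigma> t ^ n * exp (t * (\<Sum>i<n. X i))))"
      using Lp by (simp add: prod_ennreal tdens_nonneg ennreal_mult prod_nonneg)
    also have "\<dots> = (\<Prod>i<n. ennreal (lognormal_density \<sigma> (X i)))"
      by (simp add: pt prod_ennreal ld_nonneg[OF s])
    finally show "(\<Prod>i<n. ennreal (lognormal_density \<sigma> (X i))) * F X = (\<Prod>i<n. ennreal (tdens \<sigma> t (X i))) * (ennreal (lognormal_laplace \<sigma> t ^ n * exp (t * (\<Sum>i<n. X i))) * F X)"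
      by (metis mult.assoc)
  qed
  also have "\<dots> = (\<integral>\<^sup>+X. ennreal (lognormal_laplace \<sigma> t ^ n * exp (t * (\<Sum>i<n. X i))) * F X \<partial>iid_law n (tilted_distr \<sigma> t))"
    unfolding iid_tilted[OF t] by (rule nn_integral_density[OF m2 m3, symmetric])
  finally show ?thesis .
qed

lemma mgf_iid:
  assumes t: "t \<ge> 0" and tl: "t - l \<ge> 0"
  shows "(\<integral>\<^sup>+X. ennreal (exp (l * (\<Sum>i<n. X i))) \<partial>iid_law n (tilted_distr \<sigma> t))
     = ennreal ((lognormal_laplace \<sigma> (t - l) / lognormal_laplace \<sigma> t) ^ n)"
proof -
  interpret P: product_sigma_finite "\<lambda>_::nat. tilted_distr \<sigma> t"
    using tilted_prob[OF t] by (simp add: product_sigma_finite_def prob_space_imp_sigma_finite)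
  have "(\<integral>\<^sup>+X. ennreal (exp (l * (\<Sum>i<n. X i))) \<partial>iid_law n (tilted_distr \<sigma> t))
      = (\<integral>\<^sup>+X. (\<Prod>i<n. ennreal (exp (l * X i))) \<partial>iid_law n (tilted_distr \<sigma> t))"
    by (intro nn_integral_cong) (simp add: prod_ennreal sum_distrib_left exp_sum)
  also have "\<dots> = (\<Prod>i<n. \<integral>\<^sup>+y. ennreal (exp (l * y)) \<partial>tilted_distr \<sigma> t)"
    unfolding iid_law_def by (rule P.product_nn_integral_prod) (auto simp: tilted_eq)
  also have "\<dots> = (\<Prod>i<n. ennreal (lognormal_laplace \<sigma> (t - l) / lognormal_laplace \<sigma> t))"
    unfolding tilted_eq using exp_tilt_nn_integral[OF t tl]
    by (simp add: nn_integral_density)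
  also have "\<dots> = ennreal ((lognormal_laplace \<sigma> (t - l) / lognormal_laplace \<sigma> t) ^ n)"
    using lap_pos[OF s t] lap_pos[OF s tl] by (simp add: prod_ennreal ennreal_power)
  finally show ?thesis .
qed

end


context
  fixes \<sigma> :: real
  assumes s: "\<sigma> > 0"
begin

lemma ln_singleton: "emeasure (lognormal_distr \<sigma>) {a} = 0"
proof -
  have "emeasure (lognormal_distr \<sigma>) {a} = (\<integral>\<^sup>+y. ennreal (lognormal_density \<sigma> y) * indicator {a} y \<partial>lborel)"
    unfolding lognormal_distr_def by (rule emeasure_density) auto
  also have "\<dots> = (\<integral>\<^sup>+y. 0 \<partial>(lborel :: real measure))"
  proof (rule nn_integral_cong_AE)
    show "AE y in lborel. ennreal (lognormal_density \<sigma> y) * indicator {a} y = (0::ennreal)"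
      using AE_lborel_singleton[of a] by (rule eventually_mono) auto
  qed
  finally show ?thesis by simp
qed

lemma hyperplane_zero:
  "emeasure (iid_law (Suc k) (lognormal_distr \<sigma>)) {X \<in> space (iid_law (Suc k) (lognormal_distr \<sigma>)). (\<Sum>i<Suc k. X i) = c} = 0"
proof -
  let ?M = "\<lambda>_::nat. lognormal_distr \<sigma>"
  interpret P: product_sigma_finite ?M
    using ln_prob[OF s] by (simp add: product_sigma_finite_def prob_space_imp_sigma_finite)
  let ?A = "{X \<in> space (PiM (insert k {..<k}) ?M). (\<Sum>i<Suc k. X i) = c}"
  have sp: "space (lognormal_distr \<sigma>) = UNIV" unfolding lognormal_distr_def by simp
  have Sm[measurable]: "(\<lambda>X. \<Sum>i<Suc k. X i) \<in> borel_measurable (PiM (insert k {..<k}) ?M)"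
  proof (rule borel_measurable_sum)
    fix i assume "i \<in> {..<Suc k}"
    then have i: "i \<in> insert k {..<k}" by auto
    have "(\<lambda>x. x i) \<in> measurable (PiM (insert k {..<k}) ?M) (lognormal_distr \<sigma>)"
      by (rule measurable_component_singleton[OF i])
    then show "(\<lambda>x. x i) \<in> borel_measurable (PiM (insert k {..<k}) ?M)"
      unfolding lognormal_distr_def by (simp cong: measurable_cong_sets)
  qed
  have A: "?A \<in> sets (PiM (insert k {..<k}) ?M)" by measurable
  have "emeasure (PiM (insert k {..<k}) ?M) ?A = (\<integral>\<^sup>+X. indicator ?A X \<partial>PiM (insert k {..<k}) ?M)"
    using A by simp
  also have "\<dots> = (\<integral>\<^sup>+X. (\<integral>\<^sup>+y. indicator ?A (X(k := y)) \<partial>lognormal_distr \<sigma>) \<partial>PiM {..<k} ?M)"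
    using A by (intro P.product_nn_integral_insert) auto
  also have "\<dots> = (\<integral>\<^sup>+X. 0 \<partial>PiM {..<k} ?M)"
  proof (rule nn_integral_cong)
    fix X assume X: "X \<in> space (PiM {..<k} ?M)"
    have "indicator ?A (X(k := y)) = (indicator {c - (\<Sum>i<k. X i)} y :: ennreal)" for y
    proof -
      have inS: "X(k := y) \<in> space (PiM (insert k {..<k}) ?M)"
        using X by (auto simp: space_PiM sp PiE_def extensional_def)
      have "(\<Sum>i<Suc k. (X(k := y)) i) = (\<Sum>i<k. X i) + y"
        by (simp add: sum.lessThan_Suc)
      then show ?thesis using inS by (auto simp: indicator_def)
    qed
    then have "(\<integral>\<^sup>+y. indicator ?A (X(k := y)) \<partial>lognormal_distr \<sigma>) = (\<integral>\<^sup>+y. indicator {c - (\<Sum>i<k. X i)} y \<partial>lognormal_distr \<sigma>)"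
      by simp
    also have "\<dots> = emeasure (lognormal_distr \<sigma>) {c - (\<Sum>i<k. X i)}"
      by (rule nn_integral_indicator) (simp add: lognormal_distr_def)
    also have "\<dots> = 0" by (rule ln_singleton)
    finally show "(\<integral>\<^sup>+y. indicator ?A (X(k := y)) \<partial>lognormal_distr \<sigma>) = 0" .
  qed
  finally have "emeasure (PiM (insert k {..<k}) ?M) ?A = 0" by simp
  then show ?thesis unfolding iid_law_def by (simp add: lessThan_Suc)
qed

end


lemma sum_meas_lborel[measurable]: "(\<lambda>X. \<Sum>i<n. X i) \<in> borel_measurable (PiM {..<n} (\<lambda>_. lborel :: real measure))"
  by measurable

lemma sets_iid': "sets (iid_law n (density lborel g)) = sets (PiM {..<n} (\<lambda>_. lborel :: real measure))"
  unfolding iid_law_def by (rule sets_PiM_cong) auto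

lemma sum_meas_iid[measurable]: "(\<lambda>X. \<Sum>i<n. X i) \<in> borel_measurable (iid_law n (density lborel g))"
  by (subst measurable_cong_sets[OF sets_iid' refl]) (rule sum_meas_lborel)

lemma space_iid: "space (iid_law n (density lborel g)) = space (PiM {..<n} (\<lambda>_. lborel :: real measure))"
  by (rule sets_eq_imp_space_eq[OF sets_iid'])

context
  fixes \<sigma> :: real
  assumes s: "\<sigma> > 0"
begin

lemma beta_meas: "beta_est \<sigma> t x n \<in> borel_measurable (PiM {..<n} (\<lambda>_. lborel :: real measure))"
  unfolding beta_est_def by measurable

lemma iid_prob: "t \<ge> 0 \<Longrightarrow> prob_space (iid_law n (tilted_distr \<sigma> t))"
  unfolding iid_law_def by (intro prob_space_PiM tilted_prob[OF s])

lemma iid_ln_prob: "prob_space (iid_law n (lognormal_distr \<sigma>))"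
  unfolding iid_law_def by (intro prob_space_PiM ln_prob[OF s])

lemma beta_nonneg: "t \<ge> 0 \<Longrightarrow> 0 \<le> beta_est \<sigma> t x n X"
  unfolding beta_est_def using lap_pos[OF s, of t] by simp

lemma beta_bound: "t \<ge> 0 \<Longrightarrow> beta_est \<sigma> t x n X \<le> lognormal_laplace \<sigma> t ^ n * exp (t * (real n * x))"
  unfolding beta_est_def using lap_pos[OF s, of t]
  by (auto simp: indicator_def intro!: mult_left_mono)

lemma unbiased:
  assumes t: "t \<ge> 0" and n: "n \<ge> 1"
  shows "beta_mean \<sigma> t x n = alpha_prob \<sigma> x n"
proof -
  let ?P = "iid_law n (tilted_distr \<sigma> t)"
  let ?Q = "iid_law n (lognormal_distr \<sigma>)"
  let ?B = "{X \<in> space ?Q. (\<Sum>i<n. X i) < real n * x}"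
  let ?E = "{X \<in> space ?Q. (\<Sum>i<n. X i) = real n * x}"
  have spQ: "space ?Q = space (PiM {..<n} (\<lambda>_. lborel :: real measure))"
    unfolding lognormal_distr_def by (rule space_iid)
  have spP: "space ?P = space (PiM {..<n} (\<lambda>_. lborel :: real measure))"
    unfolding tilted_distr_def by (rule space_iid)
  have Bs: "?B \<in> sets ?Q" unfolding lognormal_distr_def by measurable
  have Es: "?E \<in> sets ?Q" unfolding lognormal_distr_def by measurable
  have ind_meas: "indicator ?B \<in> borel_measurable (PiM {..<n} (\<lambda>_. lborel :: real measure))"
  proof -
    have "?B = {X \<in> space (PiM {..<n} (\<lambda>_. lborel :: real measure)). (\<Sum>i<n. X i) < real n * x}"
      using spQ by simp
    also have "\<dots> \<in> sets (PiM {..<n} (\<lambda>_. lborel :: real measure))" by measurable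
    finally show ?thesis by (rule borel_measurable_indicator)
  qed
  have bm: "beta_est \<sigma> t x n \<in> borel_measurable ?P"
    by (subst measurable_cong_sets[OF _ refl], unfold tilted_distr_def, rule sets_iid') (rule beta_meas)
  have "beta_mean \<sigma> t x n = enn2real (\<integral>\<^sup>+X. ennreal (beta_est \<sigma> t x n X) \<partial>?P)"
    unfolding beta_mean_def using bm beta_nonneg[OF t] by (intro integral_eq_nn_integral) auto
  also have "(\<integral>\<^sup>+X. ennreal (beta_est \<sigma> t x n X) \<partial>?P)
      = (\<integral>\<^sup>+X. ennreal (lognormal_laplace \<sigma> t ^ n * exp (t * (\<Sum>i<n. X i))) * indicator ?B X \<partial>?P)"
  proof (rule nn_integral_cong)
    fix X assume "X \<in> space ?P"
    then have "X \<in> space ?Q" using spP spQ by simp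
    then show "ennreal (beta_est \<sigma> t x n X) = ennreal (lognormal_laplace \<sigma> t ^ n * exp (t * (\<Sum>i<n. X i))) * indicator ?B X"
      unfolding beta_est_def by (simp add: indicator_def)
  qed
  also have "\<dots> = (\<integral>\<^sup>+X. indicator ?B X \<partial>?Q)"
    by (rule change_measure[OF s t ind_meas, symmetric])
  also have "\<dots> = emeasure ?Q ?B" using Bs by simp
  finally have "beta_mean \<sigma> t x n = measure ?Q ?B" by (simp add: measure_def)
  also have "\<dots> = measure ?Q (?B \<union> ?E)"
  proof -
    obtain k where k: "n = Suc k" using n by (cases n) auto
    have "emeasure ?Q ?E = 0" unfolding k by (rule hyperplane_zero[OF s])
    then have "?E \<in> null_sets ?Q" using Es by auto
    then show ?thesis using Bs by (simp add: measure_Un_null_set)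
  qed
  also have "?B \<union> ?E = {X \<in> space ?Q. (\<Sum>i<n. X i) \<le> real n * x}" by auto
  finally show ?thesis unfolding alpha_prob_def .
qed

end


context
  fixes \<sigma> :: real
  assumes s: "\<sigma> > 0"
begin

lemma var_bound:
  assumes t: "t \<ge> 0"
  shows "beta_var \<sigma> t x n \<le> (lognormal_laplace \<sigma> t ^ n * exp (t * (real n * x)))^2"
proof -
  let ?P = "iid_law n (tilted_distr \<sigma> t)"
  let ?B = "lognormal_laplace \<sigma> t ^ n * exp (t * (real n * x))"
  interpret P: prob_space ?P by (rule iid_prob[OF s t])
  have bm: "beta_est \<sigma> t x n \<in> borel_measurable ?P"
    by (subst measurable_cong_sets[OF _ refl], unfold tilted_distr_def, rule sets_iid') (rule beta_meas[OF s])
  have B0: "0 \<le> ?B" using lap_pos[OF s t] by simp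
  have ib: "integrable ?P (beta_est \<sigma> t x n)"
    using bm beta_nonneg[OF s t] beta_bound[OF s t]
    by (intro P.integrable_const_bound[where B="?B"]) auto
  have m0: "0 \<le> beta_mean \<sigma> t x n" unfolding beta_mean_def
    using beta_nonneg[OF s t] by (intro integral_nonneg_AE) auto
  have m1: "beta_mean \<sigma> t x n \<le> ?B" unfolding beta_mean_def
    using ib beta_bound[OF s t] by (intro P.integral_le_const) auto
  have pw: "(beta_est \<sigma> t x n X - beta_mean \<sigma> t x n)^2 \<le> ?B^2" for X
  proof -
    have "\<bar>beta_est \<sigma> t x n X - beta_mean \<sigma> t x n\<bar> \<le> ?B"
      using beta_nonneg[OF s t, of x n X] beta_bound[OF s t, of x n X] m0 m1 by linarith
    then have "\<bar>beta_est \<sigma> t x n X - beta_mean \<sigma> t x n\<bar>^2 \<le> ?B^2"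
      by (intro power_mono) auto
    then show ?thesis by (simp only: power2_abs)
  qed
  have i2: "integrable ?P (\<lambda>X. (beta_est \<sigma> t x n X - beta_mean \<sigma> t x n)^2)"
    using bm pw by (intro P.integrable_const_bound[where B="?B^2"]) auto
  show ?thesis unfolding beta_var_def
    using i2 pw by (intro P.integral_le_const) auto
qed

lemma lower_general:
  assumes t: "t \<ge> 0" and l: "0 < l" "l \<le> t"
  shows "alpha_prob \<sigma> x n \<ge> lognormal_laplace \<sigma> t ^ n * exp (t * (real n * a)) *
     (1 - (exp (- l * x) * lognormal_laplace \<sigma> (t - l) / lognormal_laplace \<sigma> t) ^ n
        - (exp (l * a) * lognormal_laplace \<sigma> (t + l) / lognormal_laplace \<sigma> t) ^ n)"
proof -
  let ?P = "iid_law n (tilted_distr \<sigma> t)"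
  let ?Q = "iid_law n (lognormal_distr \<sigma>)"
  let ?L = "lognormal_laplace \<sigma>"
  let ?S = "\<lambda>X::nat\<Rightarrow>real. \<Sum>i<n. X i"
  interpret P: prob_space ?P by (rule iid_prob[OF s t])
  interpret Q: prob_space ?Q by (rule iid_ln_prob[OF s])
  have Lt: "?L t > 0" using lap_pos[OF s t] .
  have tl: "t - l \<ge> 0" using l by simp
  have tl2: "t - (- l) \<ge> 0" using l t by simp
  have spQ: "space ?Q = space (PiM {..<n} (\<lambda>_. lborel :: real measure))"
    unfolding lognormal_distr_def by (rule space_iid)
  have spP: "space ?P = space (PiM {..<n} (\<lambda>_. lborel :: real measure))"
    unfolding tilted_distr_def by (rule space_iid)
  define B where "B = {X \<in> space (PiM {..<n} (\<lambda>_. lborel :: real measure)). real n * a < ?S X \<and> ?S X \<le> real n * x}"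
  define A1 where "A1 = {X \<in> space (PiM {..<n} (\<lambda>_. lborel :: real measure)). ?S X \<le> real n * a}"
  define A2 where "A2 = {X \<in> space (PiM {..<n} (\<lambda>_. lborel :: real measure)). real n * x < ?S X}"
  have Bl: "B \<in> sets (PiM {..<n} (\<lambda>_. lborel :: real measure))" unfolding B_def by measurable
  have A1l: "A1 \<in> sets (PiM {..<n} (\<lambda>_. lborel :: real measure))" unfolding A1_def by measurable
  have A2l: "A2 \<in> sets (PiM {..<n} (\<lambda>_. lborel :: real measure))" unfolding A2_def by measurable
  have sP: "sets ?P = sets (PiM {..<n} (\<lambda>_. lborel :: real measure))"
    unfolding tilted_distr_def by (rule sets_iid')
  have sQ: "sets ?Q = sets (PiM {..<n} (\<lambda>_. lborel :: real measure))"
    unfolding lognormal_distr_def by (rule sets_iid')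
  have mS: "(\<lambda>X. ennreal (exp (c * ?S X))) \<in> borel_measurable ?P" for c
    unfolding tilted_distr_def by measurable
  have BP: "B \<in> sets ?P" "A1 \<in> sets ?P" "A2 \<in> sets ?P" using Bl A1l A2l sP by auto
  have BQ: "B \<in> sets ?Q" using Bl sQ by auto
  have a1: "measure ?Q B \<le> alpha_prob \<sigma> x n"
  proof -
    have "{X \<in> space ?Q. ?S X \<le> real n * x} \<in> sets ?Q" unfolding lognormal_distr_def by measurable
    then show ?thesis
      unfolding alpha_prob_def using BQ spQ by (intro Q.finite_measure_mono) (auto simp: B_def)
  qed
  have "emeasure ?Q B = (\<integral>\<^sup>+X. indicator B X \<partial>?Q)" using BQ by simp
  also have "\<dots> = (\<integral>\<^sup>+X. ennreal (?L t ^ n * exp (t * ?S X)) * indicator B X \<partial>?P)"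
    using Bl by (intro change_measure[OF s t]) (rule borel_measurable_indicator)
  also have "\<dots> \<ge> (\<integral>\<^sup>+X. ennreal (?L t ^ n * exp (t * (real n * a))) * indicator B X \<partial>?P)"
  proof (rule nn_integral_mono)
    fix X
    show "ennreal (?L t ^ n * exp (t * (real n * a))) * indicator B X \<le> ennreal (?L t ^ n * exp (t * ?S X)) * indicator B X"
    proof (cases "X \<in> B")
      case True
      then have "t * (real n * a) \<le> t * ?S X" using t by (intro mult_left_mono) (auto simp: B_def)
      then show ?thesis using True Lt by (auto intro!: ennreal_leI mult_left_mono)
    qed simp
  qed
  also have "(\<integral>\<^sup>+X. ennreal (?L t ^ n * exp (t * (real n * a))) * indicator B X \<partial>?P)
       = ennreal (?L t ^ n * exp (t * (real n * a))) * emeasure ?P B"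
    using BP by (simp add: nn_integral_cmult)
  finally have b1: "ennreal (?L t ^ n * exp (t * (real n * a))) * emeasure ?P B \<le> emeasure ?Q B" .
  have b2: "?L t ^ n * exp (t * (real n * a)) * measure ?P B \<le> measure ?Q B"
    using b1 Lt unfolding P.emeasure_eq_measure Q.emeasure_eq_measure
    by (simp add: ennreal_mult[symmetric])
  have "emeasure ?P A2 \<le> (\<integral>\<^sup>+X. ennreal (exp (- l * (real n * x))) * ennreal (exp (l * ?S X)) \<partial>?P)"
  proof -
    have "emeasure ?P A2 = (\<integral>\<^sup>+X. indicator A2 X \<partial>?P)" using BP by simp
    also have "\<dots> \<le> (\<integral>\<^sup>+X. ennreal (exp (- l * (real n * x))) * ennreal (exp (l * ?S X)) \<partial>?P)"
    proof (rule nn_integral_mono)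
      fix X show "indicator A2 X \<le> ennreal (exp (- l * (real n * x))) * ennreal (exp (l * ?S X))"
      proof (cases "X \<in> A2")
        case True
        then have "0 \<le> - l * (real n * x) + l * ?S X" using l by (auto simp: A2_def algebra_simps)
        then have "1 \<le> exp (- l * (real n * x) + l * ?S X)" by simp
        then show ?thesis using True by (simp add: ennreal_mult[symmetric] exp_add[symmetric])
      qed simp
    qed
    finally show ?thesis .
  qed
  also have "\<dots> = ennreal (exp (- l * (real n * x))) * ennreal ((?L (t - l) / ?L t) ^ n)"
    by (simp add: nn_integral_cmult[OF mS] mgf_iid[OF s t tl])
  also have "\<dots> = ennreal ((exp (- l * x) * ?L (t - l) / ?L t) ^ n)"
  proof -
    have "exp (- l * (real n * x)) = exp (- l * x) ^ n"
      by (simp add: exp_of_nat_mult[symmetric] algebra_simps)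
    then show ?thesis by (simp add: ennreal_mult'[symmetric] power_mult_distrib[symmetric])
  qed
  finally have d: "measure ?P A2 \<le> (exp (- l * x) * ?L (t - l) / ?L t) ^ n"
    unfolding P.emeasure_eq_measure using lap_pos[OF s tl] lap_pos[OF s tl2] Lt by (subst (asm) ennreal_le_iff) auto
  have "emeasure ?P A1 \<le> (\<integral>\<^sup>+X. ennreal (exp (l * (real n * a))) * ennreal (exp ((- l) * ?S X)) \<partial>?P)"
  proof -
    have "emeasure ?P A1 = (\<integral>\<^sup>+X. indicator A1 X \<partial>?P)" using BP by simp
    also have "\<dots> \<le> (\<integral>\<^sup>+X. ennreal (exp (l * (real n * a))) * ennreal (exp ((- l) * ?S X)) \<partial>?P)"
    proof (rule nn_integral_mono)
      fix X show "indicator A1 X \<le> ennreal (exp (l * (real n * a))) * ennreal (exp ((- l) * ?S X))"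
      proof (cases "X \<in> A1")
        case True
        then have "0 \<le> l * (real n * a) + (- l) * ?S X" using l by (auto simp: A1_def algebra_simps)
        then have "1 \<le> exp (l * (real n * a) + (- l) * ?S X)" by simp
        then show ?thesis using True by (simp add: ennreal_mult[symmetric] exp_add[symmetric])
      qed simp
    qed
    finally show ?thesis .
  qed
  also have "\<dots> = ennreal (exp (l * (real n * a))) * ennreal ((?L (t - (- l)) / ?L t) ^ n)"
    using nn_integral_cmult[OF mS[of "- l"]] mgf_iid[OF s t tl2] by simp
  also have "\<dots> = ennreal ((exp (l * a) * ?L (t + l) / ?L t) ^ n)"
  proof -
    have "exp (l * (real n * a)) = exp (l * a) ^ n"
      by (simp add: exp_of_nat_mult[symmetric] algebra_simps)
    then show ?thesis by (simp add: ennreal_mult'[symmetric] power_mult_distrib[symmetric])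
  qed
  finally have e: "measure ?P A1 \<le> (exp (l * a) * ?L (t + l) / ?L t) ^ n"
    unfolding P.emeasure_eq_measure using lap_pos[OF s tl] lap_pos[OF s tl2] Lt by (subst (asm) ennreal_le_iff) auto
  have "space ?P - (A1 \<union> A2) = B" unfolding A1_def A2_def B_def spP by auto
  then have "measure ?P B = 1 - measure ?P (A1 \<union> A2)"
    using BP by (metis P.prob_compl sets.Un)
  moreover have "measure ?P (A1 \<union> A2) \<le> measure ?P A1 + measure ?P A2"
    using BP by (intro measure_subadditive) (auto simp: P.emeasure_eq_measure)
  ultimately have c: "measure ?P B \<ge> 1 - (exp (- l * x) * ?L (t - l) / ?L t) ^ n - (exp (l * a) * ?L (t + l) / ?L t) ^ n"
    using d e by linarith
  have "?L t ^ n * exp (t * (real n * a)) * (1 - (exp (- l * x) * ?L (t - l) / ?L t) ^ n - (exp (l * a) * ?L (t + l) / ?L t) ^ n)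
     \<le> ?L t ^ n * exp (t * (real n * a)) * measure ?P B"
    using c Lt by (intro mult_left_mono) auto
  then show ?thesis using b2 a1 by linarith
qed

end


context
  fixes \<sigma> \<theta> x :: real
  assumes s: "\<sigma> > 0" and th: "\<theta> > 0"
    and der: "(lognormal_kappa \<sigma> has_real_derivative (- x)) (at \<theta>)"
begin

lemma exists_h:
  assumes eta: "\<eta> > 0"
  shows "\<exists>h>0. lognormal_kappa \<sigma> (\<theta> + h) + (\<theta> + h) * ((lognormal_kappa \<sigma> (\<theta> + h) - lognormal_kappa \<sigma> (\<theta> + 2 * h)) / h - h)
     > lognormal_kappa \<sigma> \<theta> + \<theta> * x - \<eta>"
proof -
  let ?k = "lognormal_kappa \<sigma>"
  let ?Q = "\<lambda>h. (?k (\<theta> + h) - ?k \<theta>) / h"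
  define G where "G h = ?k (\<theta> + h) + (\<theta> + h) * (?Q h - 2 * ?Q (2 * h) - h)" for h
  have Q: "(?Q \<longlongrightarrow> - x) (at 0)" using der by (simp add: DERIV_def)
  have cont: "(?k \<longlongrightarrow> ?k \<theta>) (at \<theta>)" using DERIV_isCont[OF der] by (simp add: isCont_def)
  have k1: "((\<lambda>h. ?k (\<theta> + h)) \<longlongrightarrow> ?k \<theta>) (at 0)" using LIM_offset_zero[OF cont] .
  have f2: "filterlim (\<lambda>h::real. 2 * h) (at 0) (at 0)"
  proof (rule filterlim_atI)
    show "((\<lambda>h::real. 2 * h) \<longlongrightarrow> 0) (at 0)" by (auto intro!: tendsto_eq_intros)
    show "\<forall>\<^sub>F h in at (0::real). 2 * h \<noteq> 0" by (auto simp: eventually_at_filter)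
  qed
  have Q2: "((\<lambda>h. ?Q (2 * h)) \<longlongrightarrow> - x) (at 0)"
    using filterlim_compose[OF Q f2] by simp
  have "(G \<longlongrightarrow> ?k \<theta> + (\<theta> + 0) * (- x - 2 * (- x) - 0)) (at 0)"
    unfolding G_def by (intro tendsto_intros k1 Q Q2)
  then have G: "(G \<longlongrightarrow> ?k \<theta> + \<theta> * x) (at 0)" by simp
  have "\<forall>\<^sub>F h in at 0. G h > ?k \<theta> + \<theta> * x - \<eta>"
    using G eta by (intro order_tendstoD(1)) auto
  then have "\<forall>\<^sub>F h in at_right 0. G h > ?k \<theta> + \<theta> * x - \<eta>"
    by (rule filter_leD[OF at_le, rotated]) simp
  then obtain b where b: "b > 0" "\<And>h. h > 0 \<Longrightarrow> h < b \<Longrightarrow> G h > ?k \<theta> + \<theta> * x - \<eta>"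
    unfolding eventually_at_right_field by auto
  define h where "h = b / 2"
  have h: "h > 0" "h < b" using b(1) by (auto simp: h_def)
  have "G h = ?k (\<theta> + h) + (\<theta> + h) * ((?k (\<theta> + h) - ?k (\<theta> + 2 * h)) / h - h)"
    unfolding G_def using h by (simp add: field_simps)
  then show ?thesis using b(2)[OF h] h by auto
qed

lemma alpha_lower:
  assumes eta: "\<eta> > 0"
  shows "\<exists>A. A > lognormal_kappa \<sigma> \<theta> + \<theta> * x - \<eta> \<and>
     (\<forall>\<^sub>F n in sequentially. alpha_prob \<sigma> x n \<ge> exp (real n * A) / 2)"
proof -
  let ?k = "lognormal_kappa \<sigma>"
  let ?L = "lognormal_laplace \<sigma>"
  obtain h where h: "h > 0" and hA: "?k (\<theta> + h) + (\<theta> + h) * ((?k (\<theta> + h) - ?k (\<theta> + 2 * h)) / h - h) > ?k \<theta> + \<theta> * x - \<eta>"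
    using exists_h[OF eta] by blast
  define t where "t = \<theta> + h"
  define a where "a = (?k (\<theta> + h) - ?k (\<theta> + 2 * h)) / h - h"
  define A where "A = ?k t + t * a"
  define r1 where "r1 = exp (- h * x) * ?L (t - h) / ?L t"
  define r2 where "r2 = exp (h * a) * ?L (t + h) / ?L t"
  have t0: "t \<ge> 0" using th h by (simp add: t_def)
  have Lpos: "u \<ge> 0 \<Longrightarrow> ?L u = exp (?k u)" for u
    unfolding lognormal_kappa_def using lap_pos[OF s] by simp
  have r1e: "r1 = exp (?k \<theta> - ?k t - h * x)"
    unfolding r1_def using Lpos[of t] Lpos[of \<theta>] t0 th by (simp add: t_def exp_diff exp_add[symmetric] algebra_simps)
  have r2e: "r2 = exp (- (h * h))"
  proof -
    have "r2 = exp (h * a + ?k (\<theta> + 2 * h) - ?k t)"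
      unfolding r2_def using Lpos[of t] Lpos[of "t + h"] t0 h
      by (simp add: t_def exp_diff exp_add[symmetric] algebra_simps)
    also have "h * a = ?k (\<theta> + h) - ?k (\<theta> + 2 * h) - h * h" unfolding a_def using h by (simp add: field_simps)
    finally show ?thesis by (simp add: t_def)
  qed
  have r1lt: "r1 < 1" and r1ge: "0 < r1"
    using kappa_tangent[OF s th der h] unfolding r1e t_def by auto
  have r2lt: "r2 < 1" and r2ge: "0 < r2" unfolding r2e using h by auto
  have "(\<lambda>n. r1 ^ n + r2 ^ n) \<longlonglongrightarrow> 0 + 0"
    using r1lt r1ge r2lt r2ge by (intro tendsto_add LIMSEQ_power_zero) auto
  then have ev: "\<forall>\<^sub>F n in sequentially. r1 ^ n + r2 ^ n < 1/2"
    by (intro order_tendstoD(2)) auto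
  have "\<forall>\<^sub>F n in sequentially. alpha_prob \<sigma> x n \<ge> exp (real n * A) / 2"
    using ev
  proof eventually_elim
    case (elim n)
    have lb: "alpha_prob \<sigma> x n \<ge> ?L t ^ n * exp (t * (real n * a)) * (1 - r1 ^ n - r2 ^ n)"
      using lower_general[OF s t0 h, where x=x and n=n and a=a] h less_imp_le[OF th] unfolding r1_def r2_def by (simp add: t_def)
    have "?L t ^ n * exp (t * (real n * a)) = exp (real n * A)"
      unfolding A_def using Lpos[OF t0] by (simp add: exp_of_nat_mult[symmetric] exp_add[symmetric] algebra_simps)
    moreover have "exp (real n * A) * (r1 ^ n + r2 ^ n) \<le> exp (real n * A) * (1/2)"
      using elim by (intro mult_left_mono) auto
    ultimately have "exp (real n * A) / 2 \<le> ?L t ^ n * exp (t * (real n * a)) * (1 - r1 ^ n - r2 ^ n)"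
      by (simp add: algebra_simps)
    then show ?case using lb by linarith
  qed
  moreover have "A > ?k \<theta> + \<theta> * x - \<eta>" using hA unfolding A_def a_def t_def .
  ultimately show ?thesis by blast
qed

end


lemma limsup_zero_crit:
  fixes r :: "nat \<Rightarrow> real"
  assumes c: "c < 0" and ev: "\<forall>\<^sub>F n in sequentially. 0 \<le> r n \<and> r n \<le> C * exp (real n * c)"
  shows "limsup (\<lambda>n. ereal (r n)) = 0"
proof -
  have e: "exp (real n * c) = exp c ^ n" for n by (simp add: exp_of_nat_mult[symmetric])
  have "(\<lambda>n. exp c ^ n) \<longlonglongrightarrow> 0" using c by (intro LIMSEQ_power_zero) auto
  then have "(\<lambda>n. C * exp (real n * c)) \<longlonglongrightarrow> C * 0" unfolding e by (intro tendsto_mult tendsto_const)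
  then have up: "(\<lambda>n. C * exp (real n * c)) \<longlonglongrightarrow> 0" by simp
  have "r \<longlonglongrightarrow> 0"
    by (rule tendsto_sandwich[OF _ _ tendsto_const up]) (use ev in \<open>auto elim: eventually_mono\<close>)
  then have "(\<lambda>n. ereal (r n)) \<longlonglongrightarrow> ereal 0" by (rule tendsto_ereal)
  then have "limsup (\<lambda>n. ereal (r n)) = ereal 0" by (rule lim_imp_Limsup[OF trivial_limit_sequentially])
  then show ?thesis by (simp add: zero_ereal_def)
qed

lemma alpha_le_1: "\<sigma> > 0 \<Longrightarrow> alpha_prob \<sigma> x n \<le> 1"
  unfolding alpha_prob_def using iid_ln_prob by (simp add: prob_space.prob_le_1)

theorem theorem4p1:
  fixes \<sigma> x \<theta> :: real
  assumes "\<sigma> > 0"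
    and "0 < x" and "x < exp (\<sigma>\<^sup>2 / 2)"
    and "\<theta> > 0"
    and "(lognormal_kappa \<sigma> has_real_derivative (- x)) (at \<theta>)"
  shows "(\<forall>n\<ge>1. beta_mean \<sigma> \<theta> x n = alpha_prob \<sigma> x n)
       \<and> (\<forall>\<epsilon>>0. limsup (\<lambda>n. ereal (beta_var \<sigma> \<theta> x n / alpha_prob \<sigma> x n powr (2 - \<epsilon>))) = 0)"
proof
  note s = assms(1) and th = assms(4) and der = assms(5)
  have t0: "\<theta> \<ge> 0" using th by simp
  show "\<forall>n\<ge>1. beta_mean \<sigma> \<theta> x n = alpha_prob \<sigma> x n"
    using unbiased[OF s t0] by blast
  show "\<forall>\<epsilon>>0. limsup (\<lambda>n. ereal (beta_var \<sigma> \<theta> x n / alpha_prob \<sigma> x n powr (2 - \<epsilon>))) = 0"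
  proof (intro allI impI)
    fix \<epsilon> :: real assume ep: "\<epsilon> > 0"
    define J where "J = lognormal_kappa \<sigma> \<theta> + \<theta> * x"
    have J: "J < 0" unfolding J_def by (rule J_neg[OF s th der])
    define p where "p = 2 - \<epsilon>"
    define \<eta> where "\<eta> = - \<epsilon> * J / 4"
    have eta: "\<eta> > 0" using ep J by (simp add: \<eta>_def mult_pos_neg)
    obtain A where A: "A > J - \<eta>" and evA: "\<forall>\<^sub>F n in sequentially. alpha_prob \<sigma> x n \<ge> exp (real n * A) / 2"
      using alpha_lower[OF s th der eta] unfolding J_def by blast
    have V: "beta_var \<sigma> \<theta> x n \<le> exp (real n * (2 * J))" for n
    proof -
      have "lognormal_laplace \<sigma> \<theta> ^ n = exp (real n * lognormal_kappa \<sigma> \<theta>)"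
        unfolding lognormal_kappa_def using lap_pos[OF s t0] by (simp add: exp_of_nat_mult)
      then have "(lognormal_laplace \<sigma> \<theta> ^ n * exp (\<theta> * (real n * x)))^2 = exp (real n * (2 * J))"
        unfolding J_def by (simp add: power2_eq_square exp_add[symmetric] algebra_simps)
      then show ?thesis using var_bound[OF s t0, of x n] by simp
    qed
    have V0: "0 \<le> beta_var \<sigma> \<theta> x n" for n
      unfolding beta_var_def by (intro integral_nonneg_AE) auto
    let ?r = "\<lambda>n. beta_var \<sigma> \<theta> x n / alpha_prob \<sigma> x n powr (2 - \<epsilon>)"
    show "limsup (\<lambda>n. ereal (?r n)) = 0"
    proof (cases "\<epsilon> \<le> 2")
      case True
      have p0: "0 \<le> p" "p \<le> 2" using True ep by (auto simp: p_def)
      have expo: "2 * J - p * A \<le> \<epsilon> * J / 2"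
      proof -
        have "p * (J - \<eta>) \<le> p * A" using A p0 by (intro mult_left_mono) auto
        moreover have "p * \<eta> \<le> 2 * \<eta>" using p0 eta by (intro mult_right_mono) auto
        moreover have "p * J = 2 * J - \<epsilon> * J" by (simp add: p_def algebra_simps)
        moreover have "p * (J - \<eta>) = p * J - p * \<eta>" by (simp add: algebra_simps)
        moreover have "2 * \<eta> = - (\<epsilon> * J) / 2" by (simp add: \<eta>_def)
        ultimately show ?thesis by linarith
      qed
      show ?thesis
      proof (rule limsup_zero_crit[where c="\<epsilon> * J / 2" and C="exp (p * ln 2)"])
        show "\<epsilon> * J / 2 < 0" using ep J by (simp add: mult_pos_neg)
        show "\<forall>\<^sub>F n in sequentially. 0 \<le> ?r n \<and> ?r n \<le> exp (p * ln 2) * exp (real n * (\<epsilon> * J / 2))"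
          using evA
        proof eventually_elim
          case (elim n)
          define y where "y = exp (real n * A) / 2"
          have y0: "y > 0" by (simp add: y_def)
          have ypow: "y powr p = exp (p * (real n * A) - p * ln 2)"
            using y0 by (simp add: powr_def y_def ln_div algebra_simps)
          have "y powr p \<le> alpha_prob \<sigma> x n powr p"
            using elim y0 p0 by (intro powr_mono2) (auto simp: y_def)
          then have D: "exp (p * (real n * A) - p * ln 2) \<le> alpha_prob \<sigma> x n powr (2 - \<epsilon>)"
            using ypow by (simp add: p_def)
          have "?r n \<le> exp (real n * (2 * J)) / exp (p * (real n * A) - p * ln 2)"
            using V[of n] V0[of n] D by (intro frac_le) auto
          also have "\<dots> = exp (p * ln 2) * exp (real n * (2 * J - p * A))"
            by (simp add: exp_diff exp_add[symmetric] algebra_simps)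
          also have "\<dots> \<le> exp (p * ln 2) * exp (real n * (\<epsilon> * J / 2))"
          proof -
            have "real n * (2 * J - p * A) \<le> real n * (\<epsilon> * J / 2)"
              using expo by (intro mult_left_mono) auto
            then show ?thesis by (intro mult_left_mono) auto
          qed
          finally show ?case using V0[of n] by simp
        qed
      qed
    next
      case False
      then have p0: "p < 0" by (simp add: p_def)
      show ?thesis
      proof (rule limsup_zero_crit[where c="2 * J" and C=1])
        show "2 * J < 0" using J by simp
        show "\<forall>\<^sub>F n in sequentially. 0 \<le> ?r n \<and> ?r n \<le> 1 * exp (real n * (2 * J))"
          using evA
        proof eventually_elim
          case (elim n)
          have a0: "alpha_prob \<sigma> x n > 0" using elim by (rule less_le_trans[rotated]) simp
          have a1: "alpha_prob \<sigma> x n \<le> 1" using alpha_le_1[OF s] .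
          have "ln (alpha_prob \<sigma> x n) \<le> 0" using a0 a1 by simp
          then have "0 \<le> p * ln (alpha_prob \<sigma> x n)" using p0 by (simp add: mult_nonpos_nonpos)
          then have D: "1 \<le> alpha_prob \<sigma> x n powr (2 - \<epsilon>)"
            using a0 by (simp add: powr_def p_def)
          have "?r n \<le> exp (real n * (2 * J)) / 1"
            using V[of n] V0[of n] D by (intro frac_le) auto
          then show ?case using V0[of n] by simp
        qed
      qed
    qed
  qed
qed


end
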